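(* Let $R_{\rm f}''>0$ and let $v_{\rm f}\in C^2([0,R_{\rm f}''];\mathbb{R}_+)$ satisfy $v_{\rm f}(R_{\rm f}'')>0$ and, for every $\rho\in[0,R_{\rm f}'']$, $v_{\rm f}'(\rho)\le 0$, $v_{\rm f}(\rho)+\rho\,v_{\rm f}'(\rho)>0$ and $2v_{\rm f}'(\rho)+\rho\,v_{\rm f}''(\rho)\le 0$. Let $R_{\rm f}'\in\,]0,R_{\rm f}''[$ and let $p\in C^2([R_{\rm f}',+\infty[;\mathbb{R})$ satisfy $p'(\rho)>0$ and $2p'(\rho)+\rho\,p''(\rho)>0$ for every $\rho\ge R_{\rm f}'$. Assume that $\rho\mapsto v_{\rm f}(\rho)+p(\rho)$ is increasing on $[R_{\rm f}',R_{\rm f}'']$ and that $v_{\rm f}(\rho)<\rho\,p'(\rho)$ for every $\rho\in[R_{\rm f}',R_{\rm f}'']$. Set $V_{\rm f}\doteq v_{\rm f}(R_{\rm f}'')$, $W_{\max}\doteq p(R_{\rm f}'')+V_{\rm f}$, $W_{\rm c}\doteq p(R_{\rm f}')+v_{\rm f}(R_{\rm f}')$ and $R_{\max}\doteq p^{-1}(W_{\max})$. Then for every $w\in[W_{\rm c},W_{\max}]$ the graphs of the maps $[0,R_{\rm f}'']\ni\rho\mapsto\rho\,v_{\rm f}(\rho)$ and $[R_{\rm f}',R_{\max}]\ni\rho\mapsto\rho\,[w-p(\rho)]$ intersect at a point $\rho=\rho_{\rm f}(w)>0$. Moreover, the second map is strictly decreasing at $\rho_{\rm f}(w)$ (capacity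 drop). *)

theory Defs
  imports "HOL-Analysis.Analysis"
begin

end

theory Submission
  imports Defs
begin

theorem lemma1:
  fixes v v1 v2 p p1 p2 :: "real \<Rightarrow> real" and Rp Rpp Rmax :: real
  assumes Rpp_pos: "0 < Rpp"
    and Rp: "0 < Rp" "Rp < Rpp"
    and v_d1: "\<forall>\<rho>\<in>{0..Rpp}. (v has_real_derivative v1 \<rho>) (at \<rho> within {0..Rpp})"
    and v_d2: "\<forall>\<rho>\<in>{0..Rpp}. (v1 has_real_derivative v2 \<rho>) (at \<rho> within {0..Rpp})"
    and v_c2: "continuous_on {0..Rpp} v2"
    and v_nonneg: "\<forall>\<rho>\<in>{0..Rpp}. 0 \<le> v \<rho>"
    and v_end: "0 < v Rpp"
    and v_cond: "\<forall>\<rho>\<in>{0..Rpp}. v1 \<rho> \<le> 0 \<and> 0 < v \<rho> + \<rho> * v1 \<rho> \<and> 2 * v1 \<rho> + \<rho> * v2 \<rho> \<le> 0"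
    and p_d1: "\<forall>\<rho>\<in>{Rp..}. (p has_real_derivative p1 \<rho>) (at \<rho> within {Rp..})"
    and p_d2: "\<forall>\<rho>\<in>{Rp..}. (p1 has_real_derivative p2 \<rho>) (at \<rho> within {Rp..})"
    and p_c2: "continuous_on {Rp..} p2"
    and p_cond: "\<forall>\<rho>\<in>{Rp..}. 0 < p1 \<rho> \<and> 0 < 2 * p1 \<rho> + \<rho> * p2 \<rho>"
    and vp_mono: "mono_on {Rp..Rpp} (\<lambda>\<rho>. v \<rho> + p \<rho>)"
    and vp_less: "\<forall>\<rho>\<in>{Rp..Rpp}. v \<rho> < \<rho> * p1 \<rho>"
    and Rmax: "Rp \<le> Rmax" "p Rmax = p Rpp + v Rpp"
  shows "\<forall>w\<in>{p Rp + v Rp .. p Rpp + v Rpp}.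
           \<exists>\<rho>. 0 < \<rho> \<and> \<rho> \<in> {0..Rpp} \<and> \<rho> \<in> {Rp..Rmax} \<and>
               \<rho> * v \<rho> = \<rho> * (w - p \<rho>) \<and>
               (\<exists>D < 0. ((\<lambda>r. r * (w - p r)) has_real_derivative D) (at \<rho> within {Rp..Rmax}))"
proof
  fix w assume w: "w \<in> {p Rp + v Rp .. p Rpp + v Rpp}"
  have pc: "continuous_on {Rp..} p"
    using p_d1 by (meson DERIV_continuous continuous_on_eq_continuous_within)
  have vc: "continuous_on {0..Rpp} v"
    using v_d1 by (meson DERIV_continuous continuous_on_eq_continuous_within)
  have pat: "(p has_real_derivative p1 x) (at x)" if "Rp < x" for x
  proof -
    have "at x within {Rp..} = at x"
      using that by (intro at_within_interior) auto
    with p_d1 that show ?thesis by (metis atLeast_iff less_imp_le)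
  qed
  have pinc: "p a < p b" if "Rp \<le> a" "a < b" for a b
  proof (rule DERIV_pos_imp_increasing_open[of a b p])
    show "a < b" by fact
    fix x assume x: "a < x" "x < b"
    then have "Rp < x" using that by linarith
    then show "\<exists>y. (p has_real_derivative y) (at x) \<and> 0 < y"
      using pat p_cond by (metis atLeast_iff less_imp_le)
  next
    show "continuous_on {a..b} p" using that by (auto intro: continuous_on_subset[OF pc])
  qed
  have RR: "Rpp < Rmax"
  proof (rule ccontr)
    assume "\<not> Rpp < Rmax"
    then consider "Rmax = Rpp" | "Rmax < Rpp" by linarith
    then show False
    proof cases
      case 1 then show ?thesis using Rmax v_end by simp
    next
      case 2 then show ?thesis using pinc[of Rmax Rpp] Rmax v_end by simp
    qed
  qed
  have cont: "continuous_on {Rp..Rpp} (\<lambda>r. v r + p r)"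
    by (intro continuous_intros continuous_on_subset[OF pc] continuous_on_subset[OF vc]) (use Rp in auto)
  obtain r where r: "Rp \<le> r" "r \<le> Rpp" "v r + p r = w"
    using IVT'[of "\<lambda>r. v r + p r" Rp w Rpp, OF _ _ _ cont] w Rp by auto
  have "((\<lambda>r. r * (w - p r)) has_real_derivative (1 * (w - p r) + r * (0 - p1 r))) (at r within {Rp..})"
  proof -
    have "(p has_real_derivative p1 r) (at r within {Rp..})" using p_d1 r by auto
    then show ?thesis
      by (auto intro!: derivative_eq_intros)
  qed
  then have d: "((\<lambda>r. r * (w - p r)) has_real_derivative (1 * (w - p r) + r * (0 - p1 r))) (at r within {Rp..Rmax})"
    by (rule has_field_derivative_subset) auto
  have neg: "1 * (w - p r) + r * (0 - p1 r) < 0"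
    using vp_less r by auto
  show "\<exists>\<rho>. 0 < \<rho> \<and> \<rho> \<in> {0..Rpp} \<and> \<rho> \<in> {Rp..Rmax} \<and>
               \<rho> * v \<rho> = \<rho> * (w - p \<rho>) \<and>
               (\<exists>D < 0. ((\<lambda>r. r * (w - p r)) has_real_derivative D) (at \<rho> within {Rp..Rmax}))"
    using r Rp RR d neg by (intro exI[of _ r] conjI exI[of _ "1 * (w - p r) + r * (0 - p1 r)"]) auto
qed

end
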